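(* Let $\Gamma$ be the first Grigorchuk group with generators $a,b,c,d$, acting on the right on $\{0,1\}^{\mathbb N}$, and let $\rho=111\cdots$. For a word $w=w_1\cdots w_n$ over $\{a,b,c,d\}$ set $\delta(w)=\#\{\rho\, w_{i+1}\cdots w_n: i=0,\dots,n\}$. Call $w$ pre-reduced if it contains no two consecutive letters from $\{b,c,d\}$, and let the pre-reduction of $w$ be the word obtained from $w$ by repeatedly deleting subwords $bb,cc,dd$ and replacing subwords $bc$ or $cb$ by $d$, $cd$ or $dc$ by $b$, and $db$ or $bd$ by $c$, until it is pre-reduced. Then $\delta(w)=\delta(\text{pre-reduction of } w)$.
   Context: The first Grigorchuk group $\Gamma$ is the group of permutations of the set $\{0,1\}^{\mathbb N}$ of infinite binary sequences (acting on the right) generated by $a,b,c,d$, defined recursively for $x\in\{0,1\}$ and infinite sequences $u$ by: $(xu)a=(1-x)u$; $(0u)b=0(ua)$, $(1u)b=1(uc)$; $(0u)c=0(ua)$, $(1u)c=1(ud)$; $(0u)d=0u$, $(1u)d=1(ub)$. *)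

theory Defs
  imports Main
begin

text \<open>Binary sequences in {0,1}^N are represented as nat => bool (True = 1, False = 0).\<close>

datatype gen = A | B | C | D

type_synonym seq = "nat \<Rightarrow> bool"

definition stail :: "seq \<Rightarrow> seq" where
  "stail s = (\<lambda>i. s (Suc i))"

text \<open>Bit n of the image (s)g of a sequence s under a generator g, following the
recursive definition: (xu)a = (1-x)u; (0u)b = 0(ua), (1u)b = 1(uc);
(0u)c = 0(ua), (1u)c = 1(ud); (0u)d = 0u, (1u)d = 1(ub).\<close>
fun act :: "gen \<Rightarrow> seq \<Rightarrow> seq" where
  "act A s 0 = (\<not> s 0)"
| "act A s (Suc n) = s (Suc n)"
| "act B s 0 = s 0"
| "act B s (Suc n) = (if s 0 then act C (stail s) n else act A (stail s) n)"
| "act C s 0 = s 0"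
| "act C s (Suc n) = (if s 0 then act D (stail s) n else act A (stail s) n)"
| "act D s 0 = s 0"
| "act D s (Suc n) = (if s 0 then act B (stail s) n else s (Suc n))"

text \<open>Right action of a word w1...wn: s w1 ... wn (w1 applied first).\<close>
definition act_word :: "seq \<Rightarrow> gen list \<Rightarrow> seq" where
  "act_word s w = fold act w s"

definition rho :: seq where
  "rho = (\<lambda>_. True)"

definition delta :: "gen list \<Rightarrow> nat" where
  "delta w = card ((\<lambda>i. act_word rho (drop i w)) ` {0..length w})"

definition pre_reduced :: "gen list \<Rightarrow> bool" where
  "pre_reduced w \<longleftrightarrow> (\<forall>u x y v. w = u @ [x, y] @ v \<longrightarrow> x = A \<or> y = A)"

inductive pre_step :: "gen list \<Rightarrow> gen list \<Rightarrow> bool" where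
  del_bb: "pre_step (u @ [B, B] @ v) (u @ v)"
| del_cc: "pre_step (u @ [C, C] @ v) (u @ v)"
| del_dd: "pre_step (u @ [D, D] @ v) (u @ v)"
| rep_bc: "pre_step (u @ [B, C] @ v) (u @ [D] @ v)"
| rep_cb: "pre_step (u @ [C, B] @ v) (u @ [D] @ v)"
| rep_cd: "pre_step (u @ [C, D] @ v) (u @ [B] @ v)"
| rep_dc: "pre_step (u @ [D, C] @ v) (u @ [B] @ v)"
| rep_db: "pre_step (u @ [D, B] @ v) (u @ [C] @ v)"
| rep_bd: "pre_step (u @ [B, D] @ v) (u @ [C] @ v)"

definition pre_reduction :: "gen list \<Rightarrow> gen list \<Rightarrow> bool" where
  "pre_reduction w w' \<longleftrightarrow> pre_step\<^sup>*\<^sup>* w w' \<and> pre_reduced w'"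

end

theory Submission
  imports Defs
begin

fun third :: "gen \<Rightarrow> gen \<Rightarrow> gen" where
  "third B C = D" | "third C B = D" | "third C D = B" | "third D C = B"
| "third B D = C" | "third D B = C" | "third _ _ = A"

lemma actAA: "act A (act A s) = s"
  by (rule ext, case_tac x, auto)

lemma stail_B: "stail (act B s) = (if s 0 then act C (stail s) else act A (stail s))"
  by (rule ext) (simp add: stail_def)
lemma stail_C: "stail (act C s) = (if s 0 then act D (stail s) else act A (stail s))"
  by (rule ext) (simp add: stail_def)
lemma stail_D: "stail (act D s) = (if s 0 then act B (stail s) else stail s)"
  by (rule ext) (simp add: stail_def)

lemma act0: "X \<noteq> A \<Longrightarrow> act X s 0 = s 0"
  by (cases X) auto

lemma comp: "X \<noteq> A \<Longrightarrow> Y \<noteq> A \<Longrightarrow>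
  act Y (act X s) n = (if X = Y then s n else act (third X Y) s n)"
proof (induction n arbitrary: s X Y)
  case 0
  then show ?case by (cases X; cases Y) auto
next
  case (Suc n)
  show ?case using Suc.prems
    apply (cases X; cases Y)
    apply (simp_all add: stail_B stail_C stail_D act0 actAA Suc.IH)
    apply (auto simp: stail_def)
    done
qed

lemma rho_fix: "X \<noteq> A \<Longrightarrow> act X rho n = rho n"
proof (induction n arbitrary: X)
  case 0
  then show ?case by (cases X) auto
next
  case (Suc n)
  have st: "stail rho = rho" by (simp add: stail_def rho_def)
  show ?case using Suc by (cases X) (simp_all add: st, auto simp: rho_def)
qed

lemma rho_fix': "X \<noteq> A \<Longrightarrow> act X rho = rho"
  using rho_fix by blast

definition P :: "gen list \<Rightarrow> seq set" where
  "P w = (\<lambda>i. act_word rho (drop i w)) ` {0..length w}"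

lemma aw_cons: "act_word s (x # w) = act_word (act x s) w"
  by (simp add: act_word_def)

lemma P_cons: "P (x # w) = insert (act_word rho (x # w)) (P w)"
proof -
  have "{0..length (x#w)} = insert 0 (Suc ` {0..length w})"
    by (auto simp: image_iff)
  then show ?thesis unfolding P_def by (simp only: image_insert image_image drop_Suc_Cons drop_0)
qed

lemma P_self: "act_word rho w \<in> P w"
  unfolding P_def by (rule image_eqI[where x=0]) auto

lemma P_repl:
  assumes "\<And>s. act_word s (l1 @ v) = act_word s (l2 @ v)"
    and "P (l1 @ v) = P (l2 @ v)"
  shows "P (u @ l1 @ v) = P (u @ l2 @ v)"
proof (induction u)
  case Nil
  then show ?case using assms(2) by simp
next
  case (Cons x u)
  have "act_word rho (x # u @ l1 @ v) = act_word rho (x # u @ l2 @ v)"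
    using assms(1) by (simp add: aw_cons act_word_def)
  then show ?case using Cons by (simp add: P_cons)
qed

lemma single: "X \<noteq> A \<Longrightarrow> P (X # v) = P v"
  using P_self[of v] by (simp add: P_cons aw_cons rho_fix' insert_absorb)

lemma double: "X \<noteq> A \<Longrightarrow> Y \<noteq> A \<Longrightarrow> P (X # Y # v) = P v"
  by (simp add: single)

lemma comp_fun: "X \<noteq> A \<Longrightarrow> Y \<noteq> A \<Longrightarrow> X \<noteq> Y \<Longrightarrow> act Y (act X s) = act (third X Y) s"
  using comp by (auto intro: ext)

lemma comp_id: "X \<noteq> A \<Longrightarrow> act X (act X s) = s"
  using comp[of X X] by (auto intro: ext)

lemma step_P: "pre_step w w' \<Longrightarrow> P w = P w'"
proof (induction rule: pre_step.induct)
  case (del_bb u v) show ?case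
    using P_repl[of "[B,B]" v "[]" u] by (simp add: aw_cons comp_id double)
next
  case (del_cc u v) show ?case
    using P_repl[of "[C,C]" v "[]" u] by (simp add: aw_cons comp_id double)
next
  case (del_dd u v) show ?case
    using P_repl[of "[D,D]" v "[]" u] by (simp add: aw_cons comp_id double)
next
  case (rep_bc u v) show ?case
    using P_repl[of "[B,C]" v "[D]" u] by (simp add: aw_cons comp_fun double single)
next
  case (rep_cb u v) show ?case
    using P_repl[of "[C,B]" v "[D]" u] by (simp add: aw_cons comp_fun double single)
next
  case (rep_cd u v) show ?case
    using P_repl[of "[C,D]" v "[B]" u] by (simp add: aw_cons comp_fun double single)
next
  case (rep_dc u v) show ?case
    using P_repl[of "[D,C]" v "[B]" u] by (simp add: aw_cons comp_fun double single)
next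
  case (rep_db u v) show ?case
    using P_repl[of "[D,B]" v "[C]" u] by (simp add: aw_cons comp_fun double single)
next
  case (rep_bd u v) show ?case
    using P_repl[of "[B,D]" v "[C]" u] by (simp add: aw_cons comp_fun double single)
qed

theorem lemma4p1:
  assumes "pre_reduction w w'"
  shows "delta w = delta w'"
proof -
  have "pre_step\<^sup>*\<^sup>* w w'" using assms by (simp add: pre_reduction_def)
  then have "P w = P w'"
    by (induction rule: rtranclp_induct) (auto dest: step_P)
  then show ?thesis by (simp add: delta_def P_def)
qed

end
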